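(* Let $J^{bu}(x,y,q;z)=\sum_{\nu\in\mathcal{CP}^{bu}}x^{v(\nu)}y^{h(\nu)}q^{o(\nu)}z^{c(\nu)}$. Then $$J^{bu}(x,y,q;z)=\frac{q^4xy(1-q^2yz)}{(1-q^2yz)^2-q^2(1+qyz-q^2yz)^2x}.$$
   Context: A cell is a unit square in the plane whose center is an integer point and whose sides are parallel to the axes. A polyomino is a finite set of cells which is connected under edge-adjacency; polyominoes are considered up to translation. A column (resp. row) is the set of cells whose centers have a fixed $x$- (resp. $y$-) coordinate; a polyomino is convex if each column and each row is a contiguous block of cells. Number the columns $1,2,\dots$ from left to right; $u(\nu,j)$ and $b(\nu,j)$ denote the heights (center $y$-coordinates) of the top and bottom cells of column $j$. $\mathcal{CP}^{bu}$ is the set of nonempty convex polyominoes $\nu$ such that for all columns $j$ and all $s\ge j+1$, $u(\nu,s)\le u(\nu,j)$ and $b(\nu,s)\ge b(\nu,j)$. For $\nu$: $v(\nu)$ = number of columns, $h(\nu)$ = number of rows, $c(\nu)$ = number of cells in the first (leftmost) column minus $1$, and $o(\nu)$ (outer-site perimeter) = number of cells not in $\nu$ sharing a side with a cell of $\nu$. *)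

theory Defs
  imports "HOL-Analysis.Analysis"
begin

text \<open>Cells are identified with their centers (x,y) in Z x Z.\<close>
type_synonym cell = "int \<times> int"

definition adj :: "cell \<Rightarrow> cell \<Rightarrow> bool" where
  "adj a b \<longleftrightarrow> \<bar>fst a - fst b\<bar> + \<bar>snd a - snd b\<bar> = 1"

definition polyomino :: "cell set \<Rightarrow> bool" where
  "polyomino P \<longleftrightarrow> finite P \<and>
     (\<forall>a\<in>P. \<forall>b\<in>P. (a, b) \<in> {(c, d). c \<in> P \<and> d \<in> P \<and> adj c d}\<^sup>*)"

definition convex_poly :: "cell set \<Rightarrow> bool" where
  "convex_poly P \<longleftrightarrow>
     (\<forall>a\<in>P. \<forall>b\<in>P. fst a = fst b \<longrightarrow> (\<forall>t. min (snd a) (snd b) \<le> t \<and> t \<le> max (snd a) (snd b) \<longrightarrow> (fst a, t) \<in> P)) \<and>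
     (\<forall>a\<in>P. \<forall>b\<in>P. snd a = snd b \<longrightarrow> (\<forall>t. min (fst a) (fst b) \<le> t \<and> t \<le> max (fst a) (fst b) \<longrightarrow> (t, snd a) \<in> P))"

text \<open>Columns are numbered 1,2,... from left to right: column j has x-coordinate
  (leftmost x) + j - 1.\<close>
definition column :: "cell set \<Rightarrow> nat \<Rightarrow> cell set" where
  "column P j = {c \<in> P. fst c = Min (fst ` P) + int j - 1}"

definition utop :: "cell set \<Rightarrow> nat \<Rightarrow> int" where
  "utop P j = Max (snd ` column P j)"

definition bbot :: "cell set \<Rightarrow> nat \<Rightarrow> int" where
  "bbot P j = Min (snd ` column P j)"

definition vcols :: "cell set \<Rightarrow> nat" where
  "vcols P = card (fst ` P)"

definition hrows :: "cell set \<Rightarrow> nat" where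
  "hrows P = card (snd ` P)"

definition cfirst :: "cell set \<Rightarrow> nat" where
  "cfirst P = card (column P 1) - 1"

definition operim :: "cell set \<Rightarrow> nat" where
  "operim P = card {c. c \<notin> P \<and> (\<exists>d\<in>P. adj c d)}"

definition CPbu :: "cell set \<Rightarrow> bool" where
  "CPbu P \<longleftrightarrow> P \<noteq> {} \<and> polyomino P \<and> convex_poly P \<and>
     (\<forall>j s. 1 \<le> j \<and> j + 1 \<le> s \<and> s \<le> vcols P \<longrightarrow>
        utop P s \<le> utop P j \<and> bbot P s \<ge> bbot P j)"

text \<open>Polyominoes up to translation: we take the unique representative whose
  leftmost column has x = 0 and bottom row has y = 0.\<close>
definition normalized :: "cell set \<Rightarrow> bool" where
  "normalized P \<longleftrightarrow> Min (fst ` P) = 0 \<and> Min (snd ` P) = 0"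

definition CPbu_classes :: "cell set set" where
  "CPbu_classes = {P. CPbu P \<and> normalized P}"

end

theory Submission
  imports Defs
begin

lemma sigma_real:
  fixes f :: "'a \<times> 'b \<Rightarrow> real"
  assumes inner: "\<And>x. x \<in> A \<Longrightarrow> ((\<lambda>y. f (x, y)) has_sum b x) (B x)"
    and outer: "(b has_sum s) A"
    and ainner: "\<And>x. x \<in> A \<Longrightarrow> ((\<lambda>y. \<bar>f (x, y)\<bar>) has_sum b' x) (B x)"
    and aouter: "b' summable_on A"
  shows "(f has_sum s) (Sigma A B)"
proof -
  have "(\<lambda>p. \<bar>f p\<bar>) summable_on Sigma A B"
    by (rule summable_on_SigmaI[where g = b']) (use ainner aouter in auto)
  hence "f summable_on Sigma A B"
    using abs_summable_summable[of f] by simp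
  then obtain a where a: "(f has_sum a) (Sigma A B)" unfolding summable_on_def by blast
  have "(b has_sum a) A" by (rule has_sum_Sigma'[OF a inner])
  with outer have "a = s" using has_sum_unique by blast
  with a show ?thesis by simp
qed

lemma len_Suc_image:
  "{ps. length ps = Suc m} = (\<lambda>(a, ps). a # ps) ` (UNIV \<times> {ps. length ps = m})"
proof (rule set_eqI, rule iffI)
  fix ps :: "'a list" assume "ps \<in> {ps. length ps = Suc m}"
  then obtain a qs where "ps = a # qs" "length qs = m" by (cases ps) auto
  then show "ps \<in> (\<lambda>(a, ps). a # ps) ` (UNIV \<times> {ps. length ps = m})" by force
qed auto

lemma lists_len_has_sum:
  fixes g :: "'a \<Rightarrow> real"
  assumes "(g has_sum G) UNIV" "((\<lambda>a. \<bar>g a\<bar>) has_sum G') UNIV"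
  shows "((\<lambda>ps. prod_list (map g ps)) has_sum G ^ m) {ps. length ps = m}"
  using assms
proof (induction m arbitrary: g G G')
  case 0
  have "{ps :: 'a list. length ps = 0} = {[]}" by auto
  then show ?case using has_sum_finite[of "{[]}" "\<lambda>ps. prod_list (map g ps)"] by simp
next
  case (Suc m)
  have inj: "inj_on (\<lambda>(a, ps). a # ps) (UNIV \<times> {ps :: 'a list. length ps = m})"
    by (auto simp: inj_on_def)
  have IH1: "((\<lambda>ps. prod_list (map g ps)) has_sum G ^ m) {ps. length ps = m}"
    using Suc.IH Suc.prems by blast
  have IH2: "((\<lambda>ps. prod_list (map (\<lambda>a. \<bar>g a\<bar>) ps)) has_sum G' ^ m) {ps. length ps = m}"
    using Suc.IH[of "\<lambda>a. \<bar>g a\<bar>" G' G'] Suc.prems by simp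
  have "((\<lambda>(a, ps). g a * prod_list (map g ps)) has_sum G ^ Suc m) (UNIV \<times> {ps. length ps = m})"
  proof (rule sigma_real[where b = "\<lambda>a. g a * G ^ m" and b' = "\<lambda>a. \<bar>g a\<bar> * G' ^ m"])
    show "((\<lambda>ps. (case (a, ps) of (a, ps) \<Rightarrow> g a * prod_list (map g ps))) has_sum g a * G ^ m) {ps. length ps = m}" for a
      using has_sum_cmult_right[OF IH1, of "g a"] by simp
    show "((\<lambda>a. g a * G ^ m) has_sum G ^ Suc m) UNIV"
      using has_sum_cmult_left[OF Suc.prems(1), of "G ^ m"] by (simp add: mult.commute)
    show "((\<lambda>ps. \<bar>case (a, ps) of (a, ps) \<Rightarrow> g a * prod_list (map g ps)\<bar>) has_sum \<bar>g a\<bar> * G' ^ m) {ps. length ps = m}" for a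
    proof -
      have "\<bar>prod_list (map g ps)\<bar> = prod_list (map (\<lambda>a. \<bar>g a\<bar>) ps)" for ps
        by (induction ps) (auto simp: abs_mult)
      then show ?thesis using has_sum_cmult_right[OF IH2, of "\<bar>g a\<bar>"] by (simp add: abs_mult)
    qed
    show "(\<lambda>a. \<bar>g a\<bar> * G' ^ m) summable_on UNIV"
      using has_sum_cmult_left[OF Suc.prems(2), of "G' ^ m"] has_sum_imp_summable by blast
  qed
  then show ?case
    by (subst len_Suc_image, subst has_sum_reindex[OF inj]) (simp add: o_def case_prod_unfold)
qed

lemma lists_has_sum:
  fixes g :: "'a \<Rightarrow> real"
  assumes g: "(g has_sum G) UNIV" and ga: "((\<lambda>a. \<bar>g a\<bar>) has_sum G') UNIV" and G': "G' < 1"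
  shows "((\<lambda>ps. prod_list (map g ps)) has_sum 1 / (1 - G)) UNIV"
proof -
  have G'0: "0 \<le> G'" using has_sum_nonneg[OF ga] by auto
  have GG: "\<bar>G\<bar> \<le> G'"
    using norm_infsum_le[OF g ga] by simp
  have G1: "\<bar>G\<bar> < 1" using GG G' by simp
  have inj: "inj_on snd (Sigma (UNIV :: nat set) (\<lambda>m. {ps :: 'a list. length ps = m}))"
    by (auto simp: inj_on_def)
  have im: "snd ` (Sigma (UNIV :: nat set) (\<lambda>m. {ps :: 'a list. length ps = m})) = UNIV"
    by (auto simp: image_iff)
  have "((\<lambda>(m, ps). prod_list (map g ps)) has_sum 1 / (1 - G)) (Sigma (UNIV :: nat set) (\<lambda>m. {ps :: 'a list. length ps = m}))"
  proof (rule sigma_real[where b = "\<lambda>m. G ^ m" and b' = "\<lambda>m. G' ^ m"])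
    show "((\<lambda>ps. case (m, ps) of (m, ps) \<Rightarrow> prod_list (map g ps)) has_sum G ^ m) {ps. length ps = m}" for m
      using lists_len_has_sum[OF g ga] by simp
    show "((^) G has_sum 1 / (1 - G)) UNIV"
    proof -
      have "(\<lambda>n. G ^ n) sums (1 / (1 - G))" using geometric_sums[of G] G1 by simp
      moreover have "summable (\<lambda>n. norm (G ^ n))" using G1 by (simp add: power_abs summable_geometric)
      ultimately show ?thesis using norm_summable_imp_has_sum by blast
    qed
    show "((\<lambda>ps. \<bar>case (m, ps) of (m, ps) \<Rightarrow> prod_list (map g ps)\<bar>) has_sum G' ^ m) {ps. length ps = m}" for m
    proof -
      have "\<bar>prod_list (map g ps)\<bar> = prod_list (map (\<lambda>a. \<bar>g a\<bar>) ps)" for ps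
        by (induction ps) (auto simp: abs_mult)
      then show ?thesis using lists_len_has_sum[of "\<lambda>a. \<bar>g a\<bar>" G' G' m] ga by simp
    qed
    show "(^) G' summable_on UNIV"
    proof -
      have "(\<lambda>n. G' ^ n) sums (1 / (1 - G'))" using geometric_sums[of G'] G' G'0 by simp
      moreover have "summable (\<lambda>n. norm (G' ^ n))" using G' G'0 by (simp add: norm_power summable_geometric)
      ultimately show ?thesis using norm_summable_imp_has_sum has_sum_imp_summable by blast
    qed
  qed
  then have "((\<lambda>ps. prod_list (map g ps)) \<circ> snd has_sum 1 / (1 - G)) (Sigma (UNIV :: nat set) (\<lambda>m. {ps :: 'a list. length ps = m}))"
    by (simp add: o_def case_prod_unfold)
  then show ?thesis using has_sum_reindex[OF inj] im by metis
qed

definition fw :: "real \<Rightarrow> real \<Rightarrow> real \<Rightarrow> nat \<Rightarrow> real" where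
  "fw q y z a = (q * y * z) ^ a * q ^ (max 1 a)"

definition Sw :: "real \<Rightarrow> real \<Rightarrow> real \<Rightarrow> real" where
  "Sw q y z = q + q^2 * y * z / (1 - q^2 * y * z)"

lemma fw_alt: "fw q y z a = (if a = 0 then q else (q^2 * y * z) ^ a)"
proof (cases a)
  case (Suc n)
  then show ?thesis unfolding fw_def
    by (simp add: power_mult_distrib power2_eq_square mult_ac del: power_Suc)
qed (simp add: fw_def)

lemma fw_abs: "\<bar>fw q y z a\<bar> = fw \<bar>q\<bar> \<bar>y\<bar> \<bar>z\<bar> a"
  unfolding fw_def by (simp add: abs_mult power_abs)

lemma fw_has_sum:
  assumes "\<bar>q^2 * y * z\<bar> < 1"
  shows "(fw q y z has_sum Sw q y z) UNIV"
proof -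
  let ?t = "q^2 * y * z"
  have "(fw q y z has_sum (q + ?t / (1 - ?t))) ({0} \<union> {1..})"
  proof (rule has_sum_Un_disjoint)
    show "(fw q y z has_sum q) {0}" using has_sum_finite[of "{0::nat}" "fw q y z"] by (simp add: fw_def)
    have "((\<lambda>n. ?t ^ n) has_sum ?t / (1 - ?t)) {1..}"
      using has_sum_geometric_from_1[of ?t] assms by simp
    then show "(fw q y z has_sum ?t / (1 - ?t)) {1..}"
      by (rule has_sum_cong[THEN iffD1, rotated]) (auto simp: fw_alt)
  qed auto
  moreover have "({0} \<union> {1..}) = (UNIV :: nat set)" by auto
  ultimately show ?thesis by (simp add: Sw_def)
qed

definition gw :: "real \<Rightarrow> real \<Rightarrow> real \<Rightarrow> real \<Rightarrow> nat \<times> nat \<Rightarrow> real" where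
  "gw x q y z p = x * fw q y z (fst p) * fw q y z (snd p)"

lemma gw_abs: "\<bar>gw x q y z p\<bar> = gw \<bar>x\<bar> \<bar>q\<bar> \<bar>y\<bar> \<bar>z\<bar> p"
  unfolding gw_def by (simp add: abs_mult fw_abs)

lemma gw_has_sum:
  assumes "\<bar>q^2 * y * z\<bar> < 1"
  shows "(gw x q y z has_sum x * Sw q y z ^ 2) UNIV"
proof -
  have a: "\<bar>\<bar>q\<bar>^2 * \<bar>y\<bar> * \<bar>z\<bar>\<bar> < 1" using assms by (simp add: abs_mult power_abs)
  have "(gw x q y z has_sum x * Sw q y z ^ 2) (Sigma UNIV (\<lambda>_. UNIV))"
  proof (rule sigma_real[where b = "\<lambda>a. x * fw q y z a * Sw q y z"
        and b' = "\<lambda>a. \<bar>x\<bar> * fw \<bar>q\<bar> \<bar>y\<bar> \<bar>z\<bar> a * Sw \<bar>q\<bar> \<bar>y\<bar> \<bar>z\<bar>"])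
    show "((\<lambda>b. gw x q y z (a, b)) has_sum x * fw q y z a * Sw q y z) UNIV" for a
      using has_sum_cmult_right[OF fw_has_sum[OF assms], of "x * fw q y z a"] by (simp add: gw_def)
    show "((\<lambda>a. x * fw q y z a * Sw q y z) has_sum x * Sw q y z ^ 2) UNIV"
      using has_sum_cmult_left[OF has_sum_cmult_right[OF fw_has_sum[OF assms], of x], of "Sw q y z"]
      by (simp add: power2_eq_square mult_ac)
    show "((\<lambda>b. \<bar>gw x q y z (a, b)\<bar>) has_sum \<bar>x\<bar> * fw \<bar>q\<bar> \<bar>y\<bar> \<bar>z\<bar> a * Sw \<bar>q\<bar> \<bar>y\<bar> \<bar>z\<bar>) UNIV" for a
      using has_sum_cmult_right[OF fw_has_sum[OF a], of "\<bar>x\<bar> * fw \<bar>q\<bar> \<bar>y\<bar> \<bar>z\<bar> a"] by (simp add: abs_mult fw_abs gw_def)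
    show "(\<lambda>a. \<bar>x\<bar> * fw \<bar>q\<bar> \<bar>y\<bar> \<bar>z\<bar> a * Sw \<bar>q\<bar> \<bar>y\<bar> \<bar>z\<bar>) summable_on UNIV"
      using has_sum_cmult_left[OF has_sum_cmult_right[OF fw_has_sum[OF a], of "\<bar>x\<bar>"], of "Sw \<bar>q\<bar> \<bar>y\<bar> \<bar>z\<bar>"]
      by (auto dest: has_sum_imp_summable)
  qed
  then show ?thesis by simp
qed

definition Wt :: "real \<Rightarrow> real \<Rightarrow> real \<Rightarrow> real \<Rightarrow> (nat \<times> nat) list \<times> nat \<Rightarrow> real" where
  "Wt x q y z p = x * q^4 * y * prod_list (map (gw x q y z) (fst p)) * (q^2 * y * z) ^ (snd p)"

lemma Wt_abs: "\<bar>Wt x q y z p\<bar> = Wt \<bar>x\<bar> \<bar>q\<bar> \<bar>y\<bar> \<bar>z\<bar> p"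
proof -
  have "\<bar>prod_list (map (gw x q y z) ps)\<bar> = prod_list (map (gw \<bar>x\<bar> \<bar>q\<bar> \<bar>y\<bar> \<bar>z\<bar>) ps)" for ps
    by (induction ps) (auto simp: abs_mult gw_abs)
  then show ?thesis unfolding Wt_def by (simp add: abs_mult power_abs)
qed

lemma Wt_has_sum:
  assumes t: "\<bar>q^2 * y * z\<bar> < 1" and G: "\<bar>x\<bar> * Sw \<bar>q\<bar> \<bar>y\<bar> \<bar>z\<bar> ^ 2 < 1"
  shows "(Wt x q y z has_sum (x * q^4 * y / (1 - q^2 * y * z) * (1 / (1 - x * Sw q y z ^ 2)))) UNIV"
proof -
  have a: "\<bar>\<bar>q\<bar>^2 * \<bar>y\<bar> * \<bar>z\<bar>\<bar> < 1" using t by (simp add: abs_mult power_abs)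
  have ga: "((\<lambda>p. \<bar>gw x q y z p\<bar>) has_sum \<bar>x\<bar> * Sw \<bar>q\<bar> \<bar>y\<bar> \<bar>z\<bar> ^ 2) UNIV"
    using gw_has_sum[OF a, of "\<bar>x\<bar>"] by (simp add: gw_abs)
  have L: "((\<lambda>ps. prod_list (map (gw x q y z) ps)) has_sum 1 / (1 - x * Sw q y z ^ 2)) UNIV"
    by (rule lists_has_sum[OF gw_has_sum[OF t] ga G])
  have gaa: "((\<lambda>p. \<bar>\<bar>gw x q y z p\<bar>\<bar>) has_sum \<bar>x\<bar> * Sw \<bar>q\<bar> \<bar>y\<bar> \<bar>z\<bar> ^ 2) UNIV"
    using ga by simp
  have La: "((\<lambda>ps. prod_list (map (\<lambda>p. \<bar>gw x q y z p\<bar>) ps)) has_sum 1 / (1 - \<bar>x\<bar> * Sw \<bar>q\<bar> \<bar>y\<bar> \<bar>z\<bar> ^ 2)) UNIV"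
    by (rule lists_has_sum[OF ga gaa G])
  have geo: "((\<lambda>k. (q^2 * y * z) ^ k) has_sum 1 / (1 - q^2 * y * z)) UNIV" if "\<bar>q^2 * y * z\<bar> < 1" for q y z :: real
  proof -
    have "(\<lambda>n. (q^2 * y * z) ^ n) sums (1 / (1 - q^2 * y * z))" using geometric_sums[of "q^2 * y * z"] that by simp
    moreover have "summable (\<lambda>n. norm ((q^2 * y * z) ^ n))" using that by (simp add: power_abs summable_geometric)
    ultimately show ?thesis using norm_summable_imp_has_sum by blast
  qed
  have pa: "\<bar>prod_list (map (gw x q y z) ps)\<bar> = prod_list (map (\<lambda>p. \<bar>gw x q y z p\<bar>) ps)" for ps
    by (induction ps) (auto simp: abs_mult)
  have "(Wt x q y z has_sum (x * q^4 * y / (1 - q^2 * y * z) * (1 / (1 - x * Sw q y z ^ 2)))) (Sigma UNIV (\<lambda>_. UNIV))"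
  proof (rule sigma_real[where b = "\<lambda>ps. x * q^4 * y / (1 - q^2 * y * z) * prod_list (map (gw x q y z) ps)"
        and b' = "\<lambda>ps. \<bar>x * q^4 * y\<bar> / (1 - \<bar>q^2 * y * z\<bar>) * prod_list (map (\<lambda>p. \<bar>gw x q y z p\<bar>) ps)"])
    show "((\<lambda>k. Wt x q y z (ps, k)) has_sum x * q^4 * y / (1 - q^2 * y * z) * prod_list (map (gw x q y z) ps)) UNIV" for ps
      using has_sum_cmult_right[OF geo[OF t], of "x * q^4 * y * prod_list (map (gw x q y z) ps)"]
      by (simp add: Wt_def)
    show "((\<lambda>ps. x * q^4 * y / (1 - q^2 * y * z) * prod_list (map (gw x q y z) ps)) has_sum (x * q^4 * y / (1 - q^2 * y * z) * (1 / (1 - x * Sw q y z ^ 2)))) UNIV"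
      by (rule has_sum_cmult_right[OF L])
    show "((\<lambda>k. \<bar>Wt x q y z (ps, k)\<bar>) has_sum \<bar>x * q^4 * y\<bar> / (1 - \<bar>q^2 * y * z\<bar>) * prod_list (map (\<lambda>p. \<bar>gw x q y z p\<bar>) ps)) UNIV" for ps
    proof -
      have "\<bar>\<bar>q\<bar>^2 * \<bar>y\<bar> * \<bar>z\<bar>\<bar> < 1" by (rule a)
      from has_sum_cmult_right[OF geo[OF this], of "\<bar>x * q^4 * y\<bar> * prod_list (map (\<lambda>p. \<bar>gw x q y z p\<bar>) ps)"]
      show ?thesis by (simp add: Wt_def abs_mult power_abs pa)
    qed
    show "(\<lambda>ps. \<bar>x * q^4 * y\<bar> / (1 - \<bar>q^2 * y * z\<bar>) * prod_list (map (\<lambda>p. \<bar>gw x q y z p\<bar>) ps)) summable_on UNIV"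
      by (rule has_sum_imp_summable[OF has_sum_cmult_right[OF La]])
  qed
  then show ?thesis by simp
qed

definition pbox :: "nat \<Rightarrow> (nat \<Rightarrow> int) \<Rightarrow> (nat \<Rightarrow> int) \<Rightarrow> cell set" where
  "pbox v bt tp = {c. 0 \<le> fst c \<and> fst c < int v \<and> bt (nat (fst c)) \<le> snd c \<and> snd c \<le> tp (nat (fst c))}"

definition good :: "nat \<Rightarrow> (nat \<Rightarrow> int) \<Rightarrow> (nat \<Rightarrow> int) \<Rightarrow> bool" where
  "good v bt tp \<longleftrightarrow> 1 \<le> v \<and> bt 0 = 0 \<and> bt (v - 1) \<le> tp (v - 1) \<and>
     (\<forall>i. Suc i < v \<longrightarrow> bt i \<le> bt (Suc i) \<and> tp (Suc i) \<le> tp i)"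

lemma good_mono:
  assumes g: "good v bt tp" and ij: "i \<le> j" and jv: "j < v"
  shows "bt i \<le> bt j \<and> tp j \<le> tp i"
proof -
  have "j < v \<longrightarrow> bt i \<le> bt j \<and> tp j \<le> tp i"
    using ij
  proof (induction j rule: dec_induct)
    case base then show ?case by simp
  next
    case (step n)
    then show ?case using g unfolding good_def by (meson Suc_lessD order_trans)
  qed
  then show ?thesis using jv by simp
qed

lemma good_col:
  assumes g: "good v bt tp" and i: "i < v"
  shows "0 \<le> bt i \<and> bt i \<le> tp i \<and> tp i \<le> tp 0"
proof -
  have "bt 0 \<le> bt i \<and> tp i \<le> tp 0" using good_mono[OF g, of 0 i] i by simp
  moreover have "bt i \<le> bt (v - 1) \<and> tp (v - 1) \<le> tp i" using good_mono[OF g, of i "v - 1"] i by simp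
  ultimately show ?thesis using g unfolding good_def by auto
qed

lemma pbox_mem: "(a, b) \<in> pbox v bt tp \<longleftrightarrow> 0 \<le> a \<and> a < int v \<and> bt (nat a) \<le> b \<and> b \<le> tp (nat a)"
  by (simp add: pbox_def)

lemma pbox_fst:
  assumes g: "good v bt tp"
  shows "fst ` pbox v bt tp = {0..<int v}"
proof (rule set_eqI, rule iffI)
  fix a assume "a \<in> fst ` pbox v bt tp" then show "a \<in> {0..<int v}" by (auto simp: pbox_def)
next
  fix a assume a: "a \<in> {0..<int v}"
  then have "nat a < v" by auto
  then have "(a, bt (nat a)) \<in> pbox v bt tp" using good_col[OF g] a by (auto simp: pbox_def)
  then show "a \<in> fst ` pbox v bt tp" by force
qed

lemma pbox_finite: "good v bt tp \<Longrightarrow> finite (pbox v bt tp)"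
proof -
  assume g: "good v bt tp"
  have "pbox v bt tp \<subseteq> {0..<int v} \<times> {0..tp 0}"
  proof
    fix c assume c: "c \<in> pbox v bt tp"
    obtain a b where ab: "c = (a, b)" by force
    have m: "a < int v" "0 \<le> a" "bt (nat a) \<le> b" "b \<le> tp (nat a)" using c unfolding ab pbox_mem by auto
    then have "nat a < v" by (simp add: nat_less_iff)
    from good_col[OF g this] m show "c \<in> {0..<int v} \<times> {0..tp 0}" unfolding ab by simp
  qed
  then show ?thesis by (rule finite_subset) auto
qed

lemma pbox_Min_fst: "good v bt tp \<Longrightarrow> Min (fst ` pbox v bt tp) = 0"
  by (simp add: pbox_fst) (rule Min_eqI, auto simp: good_def)

lemma pbox_vcols: "good v bt tp \<Longrightarrow> vcols (pbox v bt tp) = v"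
  by (simp add: vcols_def pbox_fst)

lemma pbox_column:
  assumes g: "good v bt tp" and i: "i < v"
  shows "column (pbox v bt tp) (Suc i) = {c. fst c = int i \<and> bt i \<le> snd c \<and> snd c \<le> tp i}"
proof (rule set_eqI)
  fix c :: cell
  obtain a b where c: "c = (a, b)" by force
  show "c \<in> column (pbox v bt tp) (Suc i) \<longleftrightarrow> c \<in> {c. fst c = int i \<and> bt i \<le> snd c \<and> snd c \<le> tp i}"
  proof
    assume "c \<in> column (pbox v bt tp) (Suc i)"
    then have "a = int i" "(a, b) \<in> pbox v bt tp" unfolding column_def pbox_Min_fst[OF g] c by auto
    then show "c \<in> {c. fst c = int i \<and> bt i \<le> snd c \<and> snd c \<le> tp i}" unfolding c pbox_mem by simp
  next
    assume "c \<in> {c. fst c = int i \<and> bt i \<le> snd c \<and> snd c \<le> tp i}"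
    then have "a = int i" "(a, b) \<in> pbox v bt tp" unfolding c pbox_mem using i by auto
    then show "c \<in> column (pbox v bt tp) (Suc i)" unfolding column_def pbox_Min_fst[OF g] c by auto
  qed
qed

lemma pbox_column_snd:
  assumes g: "good v bt tp" and i: "i < v"
  shows "snd ` column (pbox v bt tp) (Suc i) = {bt i..tp i}"
proof -
  have "{c. fst c = int i \<and> bt i \<le> snd c \<and> snd c \<le> tp i} = (\<lambda>y. (int i, y)) ` {bt i..tp i}" by auto
  then show ?thesis by (simp add: pbox_column[OF g i] image_image)
qed

lemma pbox_utop: "good v bt tp \<Longrightarrow> i < v \<Longrightarrow> utop (pbox v bt tp) (Suc i) = tp i"
  unfolding utop_def by (simp add: pbox_column_snd) (rule Max_eqI, auto dest: good_col)

lemma pbox_bbot: "good v bt tp \<Longrightarrow> i < v \<Longrightarrow> bbot (pbox v bt tp) (Suc i) = bt i"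
  unfolding bbot_def by (simp add: pbox_column_snd) (rule Min_eqI, auto dest: good_col)

lemma pbox_snd:
  assumes g: "good v bt tp"
  shows "snd ` pbox v bt tp = {0..tp 0}"
proof (rule set_eqI, rule iffI)
  fix b assume "b \<in> snd ` pbox v bt tp"
  then obtain a where ab: "(a, b) \<in> pbox v bt tp" by force
  then have "nat a < v" by (auto simp: pbox_def)
  then show "b \<in> {0..tp 0}" using good_col[OF g \<open>nat a < v\<close>] ab by (auto simp: pbox_def)
next
  fix b assume "b \<in> {0..tp 0}"
  then have "(0, b) \<in> pbox v bt tp" using g by (auto simp: pbox_def good_def)
  then show "b \<in> snd ` pbox v bt tp" by force
qed

lemma pbox_hrows: "good v bt tp \<Longrightarrow> hrows (pbox v bt tp) = nat (tp 0 + 1)"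
  by (simp add: hrows_def pbox_snd)

lemma good_tp0: "good v bt tp \<Longrightarrow> 0 \<le> tp 0"
  using good_col[of v bt tp 0] by (auto simp: good_def)

lemma pbox_normalized: "good v bt tp \<Longrightarrow> normalized (pbox v bt tp)"
  unfolding normalized_def
  by (simp add: pbox_Min_fst pbox_snd) (rule Min_eqI, auto dest: good_tp0)

lemma pbox_cfirst: "good v bt tp \<Longrightarrow> cfirst (pbox v bt tp) = nat (tp 0)"
proof -
  assume g: "good v bt tp"
  have "0 < v" using g by (simp add: good_def)
  then have "column (pbox v bt tp) 1 = (\<lambda>y. (0, y)) ` {0..tp 0}"
    using pbox_column[OF g, of 0] g by (auto simp: good_def)
  moreover have "card ((\<lambda>y. (0::int, y)) ` {0..tp 0}) = card {0..tp 0}"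
    by (rule card_image) (auto simp: inj_on_def)
  ultimately show ?thesis using good_col[OF g, of 0] \<open>0 < v\<close> by (simp add: cfirst_def)
qed

lemma pbox_convex: "good v bt tp \<Longrightarrow> convex_poly (pbox v bt tp)"
proof -
  assume g: "good v bt tp"
  show ?thesis unfolding convex_poly_def
  proof (intro conjI ballI allI impI)
    fix a b t assume "a \<in> pbox v bt tp" "b \<in> pbox v bt tp" "fst a = fst b"
      "min (snd a) (snd b) \<le> t \<and> t \<le> max (snd a) (snd b)"
    then show "(fst a, t) \<in> pbox v bt tp" by (auto simp: pbox_def)
  next
    fix a b t assume a: "a \<in> pbox v bt tp" and b: "b \<in> pbox v bt tp" and e: "snd a = snd b"
      and t: "min (fst a) (fst b) \<le> t \<and> t \<le> max (fst a) (fst b)"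
    define m where "m = max (fst a) (fst b)"
    have mb: "(m, snd a) \<in> pbox v bt tp" using a b e by (cases "fst a \<le> fst b") (auto simp: m_def pbox_def)
    have "0 \<le> t" "t \<le> m" using a b t by (auto simp: pbox_def m_def)
    then have "bt (nat t) \<le> bt (nat m) \<and> tp (nat m) \<le> tp (nat t)"
      using good_mono[OF g, of "nat t" "nat m"] mb by (auto simp: pbox_def nat_mono)
    then show "(t, snd a) \<in> pbox v bt tp" using mb \<open>0 \<le> t\<close> \<open>t \<le> m\<close> by (auto simp: pbox_def)
  qed
qed

lemma pbox_connected:
  assumes g: "good v bt tp"
  defines "R \<equiv> {(c, d). c \<in> pbox v bt tp \<and> d \<in> pbox v bt tp \<and> adj c d}"
  shows "\<forall>a\<in>pbox v bt tp. \<forall>b\<in>pbox v bt tp. (a, b) \<in> R\<^sup>*"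
proof -
  let ?P = "pbox v bt tp"
  have vert: "(0, int n) \<in> ?P \<longrightarrow> ((0, 0), (0, int n)) \<in> R\<^sup>*" for n
  proof (induction n)
    case (Suc n)
    show ?case
    proof
      assume s: "(0, int (Suc n)) \<in> ?P"
      then have "(0, int n) \<in> ?P" using g by (auto simp: pbox_def good_def)
      moreover have "((0, int n), (0, int (Suc n))) \<in> R" using s \<open>(0, int n) \<in> ?P\<close> by (simp add: R_def adj_def)
      ultimately show "((0, 0), (0, int (Suc n))) \<in> R\<^sup>*" using Suc by (meson rtrancl_into_rtrancl)
    qed
  qed simp
  have horiz: "(int m, y) \<in> ?P \<longrightarrow> ((0, y), (int m, y)) \<in> R\<^sup>*" for m y
  proof (induction m)
    case (Suc m)
    show ?case
    proof
      assume s: "(int (Suc m), y) \<in> ?P"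
      then have "Suc m < v" by (simp add: pbox_def)
      then have "bt m \<le> bt (Suc m) \<and> tp (Suc m) \<le> tp m" using g by (simp add: good_def)
      moreover have "bt (Suc m) \<le> y \<and> y \<le> tp (Suc m)" using s unfolding pbox_mem nat_int by blast
      ultimately have "(int m, y) \<in> ?P" using \<open>Suc m < v\<close> unfolding pbox_mem nat_int by auto
      moreover have "((int m, y), (int (Suc m), y)) \<in> R" using s \<open>(int m, y) \<in> ?P\<close> by (simp add: R_def adj_def)
      ultimately show "((0, y), (int (Suc m), y)) \<in> R\<^sup>*" using Suc by (meson rtrancl_into_rtrancl)
    qed
  qed simp
  have from0: "((0, 0), c) \<in> R\<^sup>*" if c: "c \<in> ?P" for c
  proof -
    obtain a b where ab: "c = (a, b)" by force
    have a0: "0 \<le> a" and "a < int v" using c ab by (auto simp: pbox_def)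
    have "nat a < v" using \<open>a < int v\<close> a0 by (simp add: nat_less_iff)
    have "0 \<le> b \<and> b \<le> tp 0" using good_col[OF g \<open>nat a < v\<close>] c ab by (auto simp: pbox_def)
    then have "(0, b) \<in> ?P" using g by (auto simp: pbox_def good_def)
    then have 1: "((0, 0), (0, b)) \<in> R\<^sup>*" using vert[of "nat b"] \<open>0 \<le> b \<and> b \<le> tp 0\<close> by simp
    have 2: "((0, b), (a, b)) \<in> R\<^sup>*" using horiz[of "nat a" b] c ab a0 by simp
    show ?thesis using 1 2 ab by simp
  qed
  have "sym R" by (auto simp: sym_def R_def adj_def abs_minus_commute)
  then have "sym (R\<^sup>*)" by (rule sym_rtrancl)
  then show ?thesis using from0 by (meson rtrancl_trans symD)
qed

lemma pbox_CPbu: "good v bt tp \<Longrightarrow> pbox v bt tp \<in> CPbu_classes"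
proof -
  assume g: "good v bt tp"
  have ne: "pbox v bt tp \<noteq> {}" using pbox_fst[OF g] g by (auto simp: good_def)
  have "polyomino (pbox v bt tp)"
    unfolding polyomino_def using pbox_finite[OF g] pbox_connected[OF g] by simp
  moreover have "\<forall>j s. 1 \<le> j \<and> j + 1 \<le> s \<and> s \<le> vcols (pbox v bt tp) \<longrightarrow>
        utop (pbox v bt tp) s \<le> utop (pbox v bt tp) j \<and> bbot (pbox v bt tp) s \<ge> bbot (pbox v bt tp) j"
  proof (intro allI impI)
    fix j s assume js: "1 \<le> j \<and> j + 1 \<le> s \<and> s \<le> vcols (pbox v bt tp)"
    then obtain j' s' where "j = Suc j'" "s = Suc s'" "j' \<le> s'" "s' < v"
    proof -
      have "j = Suc (j - 1)" "s = Suc (s - 1)" "j - 1 \<le> s - 1" "s - 1 < v"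
        using js pbox_vcols[OF g] by auto
      then show ?thesis using that by blast
    qed
    then show "utop (pbox v bt tp) s \<le> utop (pbox v bt tp) j \<and> bbot (pbox v bt tp) s \<ge> bbot (pbox v bt tp) j"
      using good_mono[OF g, of j' s'] by (simp add: pbox_utop[OF g] pbox_bbot[OF g])
  qed
  ultimately show ?thesis
    using ne pbox_convex[OF g] pbox_normalized[OF g] by (simp add: CPbu_classes_def CPbu_def)
qed

definition tpp :: "(nat \<Rightarrow> int) \<Rightarrow> nat \<Rightarrow> int" where
  "tpp tp x = (if x = 0 then tp 0 else tp (x - 1))"

lemma card_col_img:
  "card ((\<lambda>(x, y). (int x, y)) ` (SIGMA x:{..<v}. {lo x..hi x})) = (\<Sum>x<v. nat (hi x - lo x + 1))"
proof -
  have "inj_on (\<lambda>(x::nat, y::int). (int x, y)) (SIGMA x:{..<v}. {lo x..hi x})"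
    by (auto simp: inj_on_def)
  then have "card ((\<lambda>(x, y). (int x, y)) ` (SIGMA x:{..<v}. {lo x..hi x})) = card (SIGMA x:{..<v}. {lo x..hi x})"
    by (rule card_image)
  also have "\<dots> = (\<Sum>x<v. card {lo x..hi x})" by (rule card_SigmaI) auto
  finally show ?thesis by simp
qed

lemma pbox_operim:
  assumes g: "good v bt tp"
  shows "operim (pbox v bt tp) = nat (tp 0 + 1) + nat (tp (v - 1) - bt (v - 1) + 1)
     + (\<Sum>x<v. nat (max (tp x + 1) (tpp tp x) - tp x))
     + (\<Sum>x<v. nat (bt x - min (bt x - 1) (tpp bt x)))"
proof -
  let ?P = "pbox v bt tp"
  define L where "L = (\<lambda>y. (-1::int, y)) ` {0..tp 0}"
  define R where "R = (\<lambda>y. (int v, y)) ` {bt (v - 1)..tp (v - 1)}"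
  define T where "T = (\<lambda>(x, y). (int x, y)) ` (SIGMA x:{..<v}. {tp x + 1..max (tp x + 1) (tpp tp x)})"
  define B where "B = (\<lambda>(x, y). (int x, y)) ` (SIGMA x:{..<v}. {min (bt x - 1) (tpp bt x)..bt x - 1})"
  have v1: "1 \<le> v" using g by (simp add: good_def)
  have Lm: "(a, b) \<in> L \<longleftrightarrow> a = -1 \<and> 0 \<le> b \<and> b \<le> tp 0" for a b by (auto simp: L_def)
  have Rm: "(a, b) \<in> R \<longleftrightarrow> a = int v \<and> bt (v - 1) \<le> b \<and> b \<le> tp (v - 1)" for a b by (auto simp: R_def)
  have Tm: "(a, b) \<in> T \<longleftrightarrow> 0 \<le> a \<and> a < int v \<and> tp (nat a) + 1 \<le> b \<and> b \<le> max (tp (nat a) + 1) (tpp tp (nat a))" for a b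
  proof
    assume "(a, b) \<in> T"
    then obtain x where "x < v" "a = int x" "b \<in> {tp (x) + 1..max (tp (x) + 1) (tpp tp (x))}" unfolding T_def by auto
    then show "0 \<le> a \<and> a < int v \<and> tp (nat a) + 1 \<le> b \<and> b \<le> max (tp (nat a) + 1) (tpp tp (nat a))" by simp
  next
    assume r: "0 \<le> a \<and> a < int v \<and> tp (nat a) + 1 \<le> b \<and> b \<le> max (tp (nat a) + 1) (tpp tp (nat a))"
    then have "nat a < v" by (simp add: nat_less_iff)
    then have "(nat a, b) \<in> (SIGMA x:{..<v}. {tp (x) + 1..max (tp (x) + 1) (tpp tp (x))})" using r by simp
    moreover have "(a, b) = (\<lambda>(x, y). (int x, y)) (nat a, b)" using r by simp
    ultimately show "(a, b) \<in> T" unfolding T_def by blast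
  qed
  have Bm: "(a, b) \<in> B \<longleftrightarrow> 0 \<le> a \<and> a < int v \<and> min (bt (nat a) - 1) (tpp bt (nat a)) \<le> b \<and> b \<le> bt (nat a) - 1" for a b
  proof
    assume "(a, b) \<in> B"
    then obtain x where "x < v" "a = int x" "b \<in> {min (bt (x) - 1) (tpp bt (x))..bt (x) - 1}" unfolding B_def by auto
    then show "0 \<le> a \<and> a < int v \<and> min (bt (nat a) - 1) (tpp bt (nat a)) \<le> b \<and> b \<le> bt (nat a) - 1" by simp
  next
    assume r: "0 \<le> a \<and> a < int v \<and> min (bt (nat a) - 1) (tpp bt (nat a)) \<le> b \<and> b \<le> bt (nat a) - 1"
    then have "nat a < v" by (simp add: nat_less_iff)
    then have "(nat a, b) \<in> (SIGMA x:{..<v}. {min (bt (x) - 1) (tpp bt (x))..bt (x) - 1})" using r by simp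
    moreover have "(a, b) = (\<lambda>(x, y). (int x, y)) (nat a, b)" using r by simp
    ultimately show "(a, b) \<in> B" unfolding B_def by blast
  qed
  have adjd: "adj (a, b) d \<longleftrightarrow> d = (a + 1, b) \<or> d = (a - 1, b) \<or> d = (a, b + 1) \<or> d = (a, b - 1)" for a b d
  proof -
    obtain p r where d: "d = (p, r)" by force
    show ?thesis unfolding d adj_def by auto
  qed
  have O: "{c. c \<notin> ?P \<and> (\<exists>d\<in>?P. adj c d)} = L \<union> R \<union> T \<union> B"
  proof (rule set_eqI)
    fix c :: cell
    obtain a b where c: "c = (a, b)" by force
    have adjc: "(\<exists>d\<in>?P. adj c d) \<longleftrightarrow> (a + 1, b) \<in> ?P \<or> (a - 1, b) \<in> ?P \<or> (a, b + 1) \<in> ?P \<or> (a, b - 1) \<in> ?P"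
      unfolding c adjd by blast
    have "(a, b) \<notin> ?P \<and> ((a + 1, b) \<in> ?P \<or> (a - 1, b) \<in> ?P \<or> (a, b + 1) \<in> ?P \<or> (a, b - 1) \<in> ?P)
       \<longleftrightarrow> (a, b) \<in> L \<or> (a, b) \<in> R \<or> (a, b) \<in> T \<or> (a, b) \<in> B"
    proof (cases "0 \<le> a \<and> a < int v")
      case True
      then obtain x where x: "a = int x" "x < v" by (metis nat_0_le nat_less_iff)
      have n1: "nat (int x + 1) = Suc x" "nat (int x) = x" by auto
      have col: "bt x \<le> tp x" using good_col[OF g x(2)] by simp
      have n1: "nat (int x + 1) = Suc x" "nat (1 + int x) = Suc x" "nat (int x) = x" "nat (int x - 1) = x - 1"
        "(int x + 1 < int v) = (Suc x < v)" "(1 + int x < int v) = (Suc x < v)" by auto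
      show ?thesis
      proof (cases "x = 0")
        case True
        have m: "Suc 0 < v \<Longrightarrow> bt 0 \<le> bt 1 \<and> tp 1 \<le> tp 0" using g unfolding good_def One_nat_def by blast
        have g0: "bt 0 = 0" using g by (simp add: good_def)
        show ?thesis unfolding pbox_mem Lm Rm Tm Bm x(1) using x True col m g0
          by (auto simp: tpp_def)
      next
        case False
        have m1: "bt (x - 1) \<le> bt x \<and> tp x \<le> tp (x - 1)" using g False x
          unfolding good_def by (metis Suc_pred' bot_nat_0.not_eq_extremum)
        have m: "Suc x < v \<Longrightarrow> bt x \<le> bt (Suc x) \<and> tp (Suc x) \<le> tp x" using g by (simp add: good_def)
        have coly: "bt (x - 1) \<le> tp (x - 1)" using good_col[OF g, of "x - 1"] x by simp
        show ?thesis unfolding pbox_mem Lm Rm Tm Bm x(1) n1 using x False col m m1 coly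
          by (simp add: tpp_def) linarith
      qed
    next
      case False
      have colv: "bt (v - 1) \<le> tp (v - 1)" "0 \<le> tp 0" using g good_tp0[OF g] by (auto simp: good_def)
      have nv: "nat (int v - 1) = v - 1" by simp
      consider "a = -1" | "a = int v" | "a < -1 \<or> a > int v" using False by linarith
      then show ?thesis
      proof cases
        case 1
        have g0: "bt 0 = 0" using g by (simp add: good_def)
        show ?thesis unfolding pbox_mem Lm Rm Tm Bm 1 using v1 g0 by auto
      next
        case 2
        show ?thesis unfolding pbox_mem Lm Rm Tm Bm 2 nv using v1 by auto
      next
        case 3
        then have h: "\<not> (0 \<le> a \<and> a < int v)" "\<not> (0 \<le> a + 1 \<and> a + 1 < int v)"
          "\<not> (0 \<le> a - 1 \<and> a - 1 < int v)" "a \<noteq> -1" "a \<noteq> int v" by auto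
        show ?thesis unfolding pbox_mem Lm Rm Tm Bm using h by blast
      qed
    qed
    then show "c \<in> {c. c \<notin> ?P \<and> (\<exists>d\<in>?P. adj c d)} \<longleftrightarrow> c \<in> L \<union> R \<union> T \<union> B"
      using adjc c by simp
  qed
  have fin: "finite L" "finite R" "finite T" "finite B" by (auto simp: L_def R_def T_def B_def)
  have col: "bt (nat a) \<le> tp (nat a)" if "0 \<le> a" "a < int v" for a
    using good_col[OF g, of "nat a"] that by (simp add: nat_less_iff)
  have disj: "L \<inter> R = {}" "(L \<union> R) \<inter> T = {}" "(L \<union> R \<union> T) \<inter> B = {}"
    by (auto simp: disjoint_iff split_paired_All Lm Rm Tm Bm) (smt (verit) col)
  have "card (L \<union> R \<union> T \<union> B) = card L + card R + card T + card B"
    using fin disj by (simp add: card_Un_disjoint)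
  moreover have "card L = nat (tp 0 + 1)" unfolding L_def by (subst card_image) (auto simp: inj_on_def)
  moreover have "card R = nat (tp (v - 1) - bt (v - 1) + 1)" unfolding R_def by (subst card_image) (auto simp: inj_on_def)
  moreover have "card T = (\<Sum>x<v. nat (max (tp x + 1) (tpp tp x) - tp x))"
    unfolding T_def card_col_img by simp
  moreover have "card B = (\<Sum>x<v. nat (bt x - min (bt x - 1) (tpp bt x)))"
    unfolding B_def card_col_img by simp
  ultimately show ?thesis unfolding operim_def O by simp
qed

lemma path_interval:
  assumes "(a, b) \<in> {(c, d). c \<in> P \<and> d \<in> P \<and> adj c d}\<^sup>*" "a \<in> P"
  shows "min (fst a) (fst b) \<le> t \<Longrightarrow> t \<le> max (fst a) (fst b) \<Longrightarrow> t \<in> fst ` P"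
  using assms(1)
proof (induction arbitrary: t rule: rtrancl_induct)
  case base
  then have "t = fst a" by simp
  then show ?case using assms(2) by blast
next
  case (step c d)
  then have cd: "c \<in> P" "d \<in> P" "\<bar>fst c - fst d\<bar> + \<bar>snd c - snd d\<bar> = 1" by (auto simp: adj_def)
  show ?case
  proof (cases "t = fst d")
    case True then show ?thesis using cd by blast
  next
    case False
    have h: "fst c - fst d \<le> 1" "fst d - fst c \<le> 1" using cd(3) by auto
    have "min (fst a) (fst c) \<le> t \<and> t \<le> max (fst a) (fst c)"
      using step.prems False h by (auto simp: min_def max_def split: if_splits)
    then show ?thesis using step.IH by blast
  qed
qed

lemma CPbu_struct:
  assumes PC: "P \<in> CPbu_classes"
  defines "v \<equiv> vcols P" and "bt \<equiv> \<lambda>i. bbot P (Suc i)" and "tp \<equiv> \<lambda>i. utop P (Suc i)"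
  shows "good v bt tp \<and> P = pbox v bt tp"
proof -
  have ne: "P \<noteq> {}" and poly: "polyomino P" and cv: "convex_poly P"
    and cp: "\<forall>j s. 1 \<le> j \<and> j + 1 \<le> s \<and> s \<le> vcols P \<longrightarrow> utop P s \<le> utop P j \<and> bbot P s \<ge> bbot P j"
    and nm: "Min (fst ` P) = 0" "Min (snd ` P) = 0"
    using PC by (auto simp: CPbu_classes_def CPbu_def normalized_def)
  have fin: "finite P" using poly by (simp add: polyomino_def)
  have conn: "\<forall>a\<in>P. \<forall>b\<in>P. (a, b) \<in> {(c, d). c \<in> P \<and> d \<in> P \<and> adj c d}\<^sup>*"
    using poly by (simp add: polyomino_def)
  define M where "M = Max (fst ` P)"
  have finf: "finite (fst ` P)" "fst ` P \<noteq> {}" using fin ne by auto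
  have fstP: "fst ` P = {0..M}"
  proof
    show "fst ` P \<subseteq> {0..M}"
    proof
      fix t assume "t \<in> fst ` P"
      then show "t \<in> {0..M}" using Min_le[OF finf(1)] Max_ge[OF finf(1)] nm unfolding M_def by fastforce
    qed
  next
    show "{0..M} \<subseteq> fst ` P"
    proof
      fix t assume t: "t \<in> {0..M}"
      obtain a where a: "a \<in> P" "fst a = 0" using Min_in[OF finf] nm by force
      obtain b where b: "b \<in> P" "fst b = M" using Max_in[OF finf] unfolding M_def by force
      show "t \<in> fst ` P" using path_interval[of a b P t] conn a b t by auto
    qed
  qed
  have M0: "0 \<le> M" using fstP finf by auto
  have vM: "int v = M + 1" unfolding v_def vcols_def fstP using M0 by simp
  have fstP': "fst ` P = {0..<int v}" using fstP vM by auto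
  have v1: "1 \<le> v" using vM M0 by linarith
  have colP: "column P (Suc i) = {c \<in> P. fst c = int i}" for i
    unfolding column_def nm by simp
  have colfin: "finite (snd ` column P (Suc i))" for i using fin unfolding colP by auto
  have colne: "snd ` column P (Suc i) \<noteq> {}" if "i < v" for i
  proof -
    have "int i \<in> fst ` P" using fstP' that by auto
    then show ?thesis unfolding colP by force
  qed
  have inb: "bt (nat (fst c)) \<le> snd c \<and> snd c \<le> tp (nat (fst c))" if c: "c \<in> P" for c
  proof -
    have "fst c \<ge> 0" using c fstP' by force
    then have "c \<in> column P (Suc (nat (fst c)))" unfolding colP using c by simp
    then show ?thesis unfolding bt_def tp_def bbot_def utop_def using colfin by (auto intro: Min_le Max_ge)
  qed
  have fill: "(int i, y) \<in> P" if i: "i < v" and y: "bt i \<le> y" "y \<le> tp i" for i y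
  proof -
    obtain a where a: "a \<in> column P (Suc i)" "snd a = bt i"
      using Min_in[OF colfin colne[OF i]] unfolding bt_def bbot_def by force
    obtain b where b: "b \<in> column P (Suc i)" "snd b = tp i"
      using Max_in[OF colfin colne[OF i]] unfolding tp_def utop_def by force
    have "a \<in> P" "b \<in> P" "fst a = int i" "fst b = int i" using a b unfolding colP by auto
    moreover have "\<forall>a\<in>P. \<forall>b\<in>P. fst a = fst b \<longrightarrow> (\<forall>t. min (snd a) (snd b) \<le> t \<and> t \<le> max (snd a) (snd b) \<longrightarrow> (fst a, t) \<in> P)"
      using cv by (simp add: convex_poly_def)
    moreover have "min (snd a) (snd b) \<le> y \<and> y \<le> max (snd a) (snd b)" using y a(2) b(2) by auto
    ultimately show ?thesis by metis
  qed
  have eq: "P = pbox v bt tp"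
  proof
    show "P \<subseteq> pbox v bt tp"
    proof
      fix c assume c: "c \<in> P"
      then have "fst c \<in> {0..<int v}" using fstP' by blast
      then show "c \<in> pbox v bt tp" using inb[OF c] by (simp add: pbox_def)
    qed
  next
    show "pbox v bt tp \<subseteq> P"
    proof
      fix c assume c: "c \<in> pbox v bt tp"
      obtain a b where ab: "c = (a, b)" by force
      have a: "0 \<le> a" "a < int v" "bt (nat a) \<le> b" "b \<le> tp (nat a)" using c unfolding ab pbox_mem by auto
      have "nat a < v" using a by (simp add: nat_less_iff)
      from fill[OF this a(3,4)] a(1) show "c \<in> P" unfolding ab by simp
    qed
  qed
  have mono: "bt i \<le> bt j \<and> tp j \<le> tp i" if "i \<le> j" "j < v" for i j
  proof (cases "i = j")
    case False
    then have "1 \<le> Suc i \<and> Suc i + 1 \<le> Suc j \<and> Suc j \<le> vcols P" using that v_def by auto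
    then show ?thesis using cp unfolding bt_def tp_def by blast
  qed simp
  have bt0: "bt 0 = 0"
  proof -
    obtain c where c: "c \<in> P" "snd c = 0" using Min_in[of "snd ` P"] fin ne nm by force
    have "fst c \<in> {0..<int v}" using c fstP' by blast
    then have "nat (fst c) < v" by (simp add: nat_less_iff)
    then have "bt 0 \<le> 0" using mono[of 0 "nat (fst c)"] inb[OF c(1)] c(2) by simp
    moreover have "bt 0 \<in> snd ` P"
      using Min_in[OF colfin colne[of 0]] v1 unfolding bt_def bbot_def colP by auto
    then have "0 \<le> bt 0" using nm fin by (metis Min_le finite_imageI)
    ultimately show ?thesis by simp
  qed
  have last: "bt (v - 1) \<le> tp (v - 1)"
  proof -
    have vv: "v - 1 < v" using v1 by simp
    have "Min (snd ` column P (Suc (v - 1))) \<in> snd ` column P (Suc (v - 1))" by (rule Min_in[OF colfin colne[OF vv]])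
    then have "Min (snd ` column P (Suc (v - 1))) \<le> Max (snd ` column P (Suc (v - 1)))" by (rule Max_ge[OF colfin])
    then show ?thesis unfolding bt_def tp_def bbot_def utop_def .
  qed
  have "good v bt tp" unfolding good_def using v1 bt0 last mono by auto
  then show ?thesis using eq by simp
qed

definition btf :: "(nat \<times> nat) list \<Rightarrow> nat \<Rightarrow> int" where
  "btf ps i = int (sum_list (take i (map snd ps)))"

definition tpf :: "(nat \<times> nat) list \<Rightarrow> nat \<Rightarrow> nat \<Rightarrow> int" where
  "tpf ps k i = int (sum_list (map fst ps) + sum_list (map snd ps) + k) - int (sum_list (take i (map fst ps)))"

definition Phi :: "(nat \<times> nat) list \<times> nat \<Rightarrow> cell set" where
  "Phi p = pbox (Suc (length (fst p))) (btf (fst p)) (tpf (fst p) (snd p))"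

lemma btf_Suc: "i < length ps \<Longrightarrow> btf ps (Suc i) = btf ps i + int (snd (ps ! i))"
  by (simp add: btf_def take_Suc_conv_app_nth)

lemma tpf_Suc: "i < length ps \<Longrightarrow> tpf ps k (Suc i) = tpf ps k i - int (fst (ps ! i))"
  by (simp add: tpf_def take_Suc_conv_app_nth)

lemma btf_0[simp]: "btf ps 0 = 0" by (simp add: btf_def)
lemma tpf_0[simp]: "tpf ps k 0 = int (sum_list (map fst ps) + sum_list (map snd ps) + k)" by (simp add: tpf_def)

lemma btf_len: "btf ps (length ps) = int (sum_list (map snd ps))" by (simp add: btf_def)
lemma tpf_len: "tpf ps k (length ps) = int (sum_list (map snd ps) + k)" by (simp add: tpf_def)

lemma good_Phi: "good (Suc (length ps)) (btf ps) (tpf ps k)"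
  unfolding good_def by (simp add: btf_len tpf_len btf_Suc tpf_Suc)

lemma sum_nth_map: "(\<Sum>i<length ps. f (ps ! i)) = sum_list (map f ps)"
  by (simp add: sum_list_sum_nth atLeast0LessThan)

lemma Phi_stats:
  fixes ps :: "(nat \<times> nat) list" and k :: nat
  defines "n \<equiv> sum_list (map fst ps) + sum_list (map snd ps) + k"
  shows "vcols (Phi (ps, k)) = Suc (length ps)"
    and "hrows (Phi (ps, k)) = Suc n"
    and "cfirst (Phi (ps, k)) = n"
    and "operim (Phi (ps, k)) = Suc n + Suc k + Suc (sum_list (map (\<lambda>p. max 1 (fst p)) ps))
            + Suc (sum_list (map (\<lambda>p. max 1 (snd p)) ps))"
proof -
  let ?v = "Suc (length ps)" and ?bt = "btf ps" and ?tp = "tpf ps k"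
  have g: "good ?v ?bt ?tp" by (rule good_Phi)
  show "vcols (Phi (ps, k)) = Suc (length ps)" unfolding Phi_def using pbox_vcols[OF g] by simp
  show "hrows (Phi (ps, k)) = Suc n" unfolding Phi_def fst_conv snd_conv pbox_hrows[OF g] n_def by simp
  show "cfirst (Phi (ps, k)) = n" unfolding Phi_def fst_conv snd_conv pbox_cfirst[OF g] n_def by simp
  have s1: "(\<Sum>x<?v. nat (max (?tp x + 1) (tpp ?tp x) - ?tp x)) = Suc (sum_list (map (\<lambda>p. max 1 (fst p)) ps))"
  proof -
    have "(\<Sum>x<?v. nat (max (?tp x + 1) (tpp ?tp x) - ?tp x)) = 1 + (\<Sum>i<length ps. nat (max (?tp (Suc i) + 1) (tpp ?tp (Suc i)) - ?tp (Suc i)))"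
      by (subst sum.lessThan_Suc_shift) (simp add: tpp_def)
    also have "(\<Sum>i<length ps. nat (max (?tp (Suc i) + 1) (tpp ?tp (Suc i)) - ?tp (Suc i))) = (\<Sum>i<length ps. max 1 (fst (ps ! i)))"
      by (rule sum.cong) (auto simp: tpp_def tpf_Suc)
    also have "(\<Sum>i<length ps. max 1 (fst (ps ! i))) = sum_list (map (\<lambda>p. max 1 (fst p)) ps)"
      by (rule sum_nth_map)
    finally show ?thesis by simp
  qed
  have s2: "(\<Sum>x<?v. nat (?bt x - min (?bt x - 1) (tpp ?bt x))) = Suc (sum_list (map (\<lambda>p. max 1 (snd p)) ps))"
  proof -
    have "(\<Sum>x<?v. nat (?bt x - min (?bt x - 1) (tpp ?bt x))) = 1 + (\<Sum>i<length ps. nat (?bt (Suc i) - min (?bt (Suc i) - 1) (tpp ?bt (Suc i))))"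
      by (subst sum.lessThan_Suc_shift) (simp add: tpp_def)
    also have "(\<Sum>i<length ps. nat (?bt (Suc i) - min (?bt (Suc i) - 1) (tpp ?bt (Suc i)))) = (\<Sum>i<length ps. max 1 (snd (ps ! i)))"
      by (rule sum.cong) (auto simp: tpp_def btf_Suc)
    also have "(\<Sum>i<length ps. max 1 (snd (ps ! i))) = sum_list (map (\<lambda>p. max 1 (snd p)) ps)"
      by (rule sum_nth_map)
    finally show ?thesis by simp
  qed
  show "operim (Phi (ps, k)) = Suc n + Suc k + Suc (sum_list (map (\<lambda>p. max 1 (fst p)) ps))
            + Suc (sum_list (map (\<lambda>p. max 1 (snd p)) ps))"
    unfolding Phi_def fst_conv snd_conv pbox_operim[OF g] s1 s2
    by (simp add: btf_len tpf_len n_def)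
qed

lemma prod_gw:
  "prod_list (map (gw x q y z) ps) = x ^ length ps * (q * y * z) ^ (sum_list (map fst ps) + sum_list (map snd ps))
     * q ^ (sum_list (map (\<lambda>p. max 1 (fst p)) ps) + sum_list (map (\<lambda>p. max 1 (snd p)) ps))"
  by (induction ps) (auto simp: gw_def fw_def power_add mult_ac)

lemma weight_alg:
  "(x::real) ^ Suc m * y ^ Suc (a + k) * q ^ (Suc (a + k) + Suc k + Suc c + Suc d) * z ^ (a + k)
    = x * q^4 * y * (x^m * (q*y*z)^a * q^(c+d)) * (q^2*y*z)^k"
proof -
  have e: "Suc (a + k) + Suc k + Suc c + Suc d = 4 + a + (k + k) + c + d" by simp
  have f: "(q^2)^k = q^k * q^k" by (simp add: power2_eq_square power_mult_distrib)
  show ?thesis by (subst e) (simp only: power_add power_mult_distrib f power_Suc ac_simps)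
qed

lemma weight_Phi:
  "x ^ vcols (Phi p) * y ^ hrows (Phi p) * q ^ operim (Phi p) * z ^ cfirst (Phi p) = Wt x q y z p"
proof -
  obtain ps k where p: "p = (ps, k)" by force
  show ?thesis unfolding p Phi_stats Wt_def fst_conv snd_conv prod_gw
    by (rule weight_alg)
qed

definition extr :: "cell set \<Rightarrow> (nat \<times> nat) list \<times> nat" where
  "extr P = (map (\<lambda>i. (nat (utop P (Suc i) - utop P (Suc (Suc i))), nat (bbot P (Suc (Suc i)) - bbot P (Suc i)))) [0..<vcols P - 1],
           nat (utop P (vcols P) - bbot P (vcols P)))"

lemma extr_Phi: "extr (Phi p) = p"
proof -
  obtain ps k where p: "p = (ps, k)" by force
  let ?P = "Phi (ps, k)"
  have g: "good (Suc (length ps)) (btf ps) (tpf ps k)" by (rule good_Phi)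
  have P: "?P = pbox (Suc (length ps)) (btf ps) (tpf ps k)" by (simp add: Phi_def)
  have vc: "vcols ?P = Suc (length ps)" by (rule Phi_stats(1))
  have ut: "utop ?P (Suc i) = tpf ps k i" if "i < Suc (length ps)" for i
    unfolding P using pbox_utop[OF g that] .
  have bb: "bbot ?P (Suc i) = btf ps i" if "i < Suc (length ps)" for i
    unfolding P using pbox_bbot[OF g that] .
  have 1: "map (\<lambda>i. (nat (utop ?P (Suc i) - utop ?P (Suc (Suc i))), nat (bbot ?P (Suc (Suc i)) - bbot ?P (Suc i)))) [0..<vcols ?P - 1] = ps"
  proof (rule nth_equalityI)
    fix i assume "i < length (map (\<lambda>i. (nat (utop ?P (Suc i) - utop ?P (Suc (Suc i))), nat (bbot ?P (Suc (Suc i)) - bbot ?P (Suc i)))) [0..<vcols ?P - 1])"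
    then have i: "i < length ps" using vc by simp
    then show "map (\<lambda>i. (nat (utop ?P (Suc i) - utop ?P (Suc (Suc i))), nat (bbot ?P (Suc (Suc i)) - bbot ?P (Suc i)))) [0..<vcols ?P - 1] ! i = ps ! i"
      using vc ut[of i] ut[of "Suc i"] bb[of i] bb[of "Suc i"] by (simp add: tpf_Suc btf_Suc)
  qed (simp add: vc)
  have 2: "nat (utop ?P (vcols ?P) - bbot ?P (vcols ?P)) = k"
    using vc ut[of "length ps"] bb[of "length ps"] by (simp add: tpf_len btf_len)
  show ?thesis unfolding p extr_def using 1 2 by simp
qed

lemma pbox_cong: "(\<And>i. i < v \<Longrightarrow> bt i = bt' i \<and> tp i = tp' i) \<Longrightarrow> pbox v bt tp = pbox v bt' tp'"
proof -
  assume h: "\<And>i. i < v \<Longrightarrow> bt i = bt' i \<and> tp i = tp' i"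
  show ?thesis
  proof (rule set_eqI)
    fix c :: cell
    obtain a b where ab: "c = (a, b)" by force
    show "c \<in> pbox v bt tp \<longleftrightarrow> c \<in> pbox v bt' tp'"
    proof (cases "0 \<le> a \<and> a < int v")
      case True
      then have "nat a < v" by (simp add: nat_less_iff)
      then show ?thesis unfolding ab pbox_mem using h[of "nat a"] by simp
    qed (auto simp: ab pbox_mem)
  qed
qed

lemma tele_up:
  assumes "\<And>j. j < i \<Longrightarrow> f j \<le> f (Suc j)"
  shows "int (sum_list (map (\<lambda>j. nat (f (Suc j) - f j)) [0..<i])) = f i - f 0"
  using assms by (induction i) auto

lemma tele_down:
  assumes "\<And>j. j < i \<Longrightarrow> f (Suc j) \<le> f j"
  shows "int (sum_list (map (\<lambda>j. nat (f j - f (Suc j))) [0..<i])) = f 0 - f i"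
  using assms by (induction i) auto

lemma Phi_extr:
  assumes PC: "P \<in> CPbu_classes"
  shows "Phi (extr P) = P"
proof -
  define v bt tp where "v = vcols P" and "bt = (\<lambda>i. bbot P (Suc i))" and "tp = (\<lambda>i. utop P (Suc i))"
  have st: "good v bt tp \<and> P = pbox v bt tp" using CPbu_struct[OF PC] unfolding v_def bt_def tp_def .
  then have g: "good v bt tp" and P: "P = pbox v bt tp" by auto
  have v1: "1 \<le> v" using g by (simp add: good_def)
  define m where "m = v - 1"
  have vm: "v = Suc m" using v1 m_def by simp
  define ps where "ps = map (\<lambda>i. (nat (tp i - tp (Suc i)), nat (bt (Suc i) - bt i))) [0..<m]"
  define k where "k = nat (tp m - bt m)"
  have E: "extr P = (ps, k)" unfolding extr_def ps_def k_def tp_def bt_def v_def[symmetric] m_def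
    using vm by simp
  have lps: "length ps = m" by (simp add: ps_def)
  have mono: "bt i \<le> bt j \<and> tp j \<le> tp i" if "i \<le> j" "j < v" for i j using good_mono[OF g that] .
  have bt0: "bt 0 = 0" using g by (simp add: good_def)
  have lastc: "bt m \<le> tp m" using g m_def by (simp add: good_def)
  have sB: "int (sum_list (take i (map snd ps))) = bt i" if "i \<le> m" for i
  proof -
    have "take i (map snd ps) = map (\<lambda>j. nat (bt (Suc j) - bt j)) [0..<i]"
      using that by (simp add: ps_def take_map take_upt)
    moreover have "int (sum_list (map (\<lambda>j. nat (bt (Suc j) - bt j)) [0..<i])) = bt i - bt 0"
      by (rule tele_up) (use mono vm that in auto)
    ultimately show ?thesis using bt0 by simp
  qed
  have sA: "int (sum_list (take i (map fst ps))) = tp 0 - tp i" if "i \<le> m" for i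
  proof -
    have "take i (map fst ps) = map (\<lambda>j. nat (tp j - tp (Suc j))) [0..<i]"
      using that by (simp add: ps_def take_map take_upt)
    moreover have "int (sum_list (map (\<lambda>j. nat (tp j - tp (Suc j))) [0..<i])) = tp 0 - tp i"
      by (rule tele_down) (use mono vm that in auto)
    ultimately show ?thesis by simp
  qed
  have SA: "int (sum_list (map fst ps)) = tp 0 - tp m" using sA[of m] lps by simp
  have SB: "int (sum_list (map snd ps)) = bt m" using sB[of m] lps by simp
  have "Phi (ps, k) = pbox v (btf ps) (tpf ps k)" by (simp add: Phi_def lps vm)
  also have "\<dots> = pbox v bt tp"
  proof (rule pbox_cong)
    fix i assume i: "i < v"
    then have im: "i \<le> m" using vm by simp
    have "btf ps i = bt i" unfolding btf_def using sB[OF im] .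
    moreover have "tpf ps k i = tp i"
      unfolding tpf_def using sA[OF im] SA SB lastc k_def by simp
    ultimately show "btf ps i = bt i \<and> tpf ps k i = tp i" by simp
  qed
  finally show ?thesis using E P by simp
qed

lemma Phi_in: "Phi p \<in> CPbu_classes"
  unfolding Phi_def by (rule pbox_CPbu[OF good_Phi])

theorem lemma6p1:
  "\<exists>\<epsilon>>0. \<forall>x y q z :: real. \<bar>x\<bar> < \<epsilon> \<and> \<bar>y\<bar> < \<epsilon> \<and> \<bar>q\<bar> < \<epsilon> \<and> \<bar>z\<bar> < \<epsilon> \<longrightarrow>
     ((\<lambda>P. x ^ vcols P * y ^ hrows P * q ^ operim P * z ^ cfirst P) has_sum
        (q^4 * x * y * (1 - q^2 * y * z) /
         ((1 - q^2 * y * z)^2 - q^2 * (1 + q * y * z - q^2 * y * z)^2 * x))) CPbu_classes"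
proof (intro exI[of _ "1/8"] conjI allI impI)
  show "(0::real) < 1/8" by simp
  fix x y q z :: real
  assume b: "\<bar>x\<bar> < 1/8 \<and> \<bar>y\<bar> < 1/8 \<and> \<bar>q\<bar> < 1/8 \<and> \<bar>z\<bar> < 1/8"
  define t where "t = q^2 * y * z"
  have qyz: "\<bar>q\<bar> * \<bar>y\<bar> * \<bar>z\<bar> \<le> 1"
  proof -
    have "\<bar>q\<bar> * \<bar>y\<bar> \<le> 1" using b by (intro mult_le_one) auto
    then show ?thesis using b by (intro mult_le_one) auto
  qed
  have tq: "\<bar>q\<bar>^2 * \<bar>y\<bar> * \<bar>z\<bar> \<le> \<bar>q\<bar>"
  proof -
    have "\<bar>q\<bar>^2 * \<bar>y\<bar> * \<bar>z\<bar> = \<bar>q\<bar> * (\<bar>q\<bar> * \<bar>y\<bar> * \<bar>z\<bar>)" by (simp add: power2_eq_square mult_ac)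
    also have "\<dots> \<le> \<bar>q\<bar>" using qyz by (intro mult_left_le) auto
    finally show ?thesis .
  qed
  have at: "\<bar>t\<bar> = \<bar>q\<bar>^2 * \<bar>y\<bar> * \<bar>z\<bar>" by (simp add: t_def abs_mult power_abs)
  have t1: "\<bar>q^2 * y * z\<bar> < 1" using at tq b by (simp add: t_def)
  have Sb: "Sw \<bar>q\<bar> \<bar>y\<bar> \<bar>z\<bar> < 1"
  proof -
    let ?a = "\<bar>q\<bar>^2 * \<bar>y\<bar> * \<bar>z\<bar>"
    have a0: "0 \<le> ?a" by simp
    have a1: "?a < 1/8" using tq b by simp
    have "?a / (1 - ?a) \<le> (1/8) / (1 - 1/8)"
      using a0 a1 by (intro frac_le) auto
    then show ?thesis unfolding Sw_def using b by simp
  qed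
  have S0: "0 \<le> Sw \<bar>q\<bar> \<bar>y\<bar> \<bar>z\<bar>"
  proof -
    have "\<bar>q\<bar>^2 * \<bar>y\<bar> * \<bar>z\<bar> < 1" using tq b by simp
    then show ?thesis unfolding Sw_def by simp
  qed
  have G: "\<bar>x\<bar> * Sw \<bar>q\<bar> \<bar>y\<bar> \<bar>z\<bar> ^ 2 < 1"
  proof -
    have "Sw \<bar>q\<bar> \<bar>y\<bar> \<bar>z\<bar> ^ 2 \<le> 1" using Sb S0 by (simp add: power_le_one)
    then have "\<bar>x\<bar> * Sw \<bar>q\<bar> \<bar>y\<bar> \<bar>z\<bar> ^ 2 \<le> \<bar>x\<bar>" by (intro mult_left_le) auto
    then show ?thesis using b by simp
  qed
  have H: "(Wt x q y z has_sum (x * q^4 * y / (1 - q^2 * y * z) * (1 / (1 - x * Sw q y z ^ 2)))) UNIV"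
    by (rule Wt_has_sum[OF t1 G])
  have t1': "1 - t \<noteq> 0" using t1 unfolding t_def by auto
  define D where "D = (1 - q^2 * y * z)^2 - q^2 * (1 + q * y * z - q^2 * y * z)^2 * x"
  have sw: "Sw q y z = q * (1 + q * y * z - t) / (1 - t)"
  proof -
    have "Sw q y z = q + t / (1 - t)" unfolding Sw_def t_def ..
    also have "\<dots> = (q * (1 - t) + t) / (1 - t)" using t1' by (simp add: field_simps)
    also have "q * (1 - t) + t = q * (1 + q * y * z - t)" unfolding t_def by (simp add: algebra_simps power2_eq_square)
    finally show ?thesis .
  qed
  have e1: "1 - x * Sw q y z ^ 2 = D / (1 - t)^2"
  proof -
    have "1 - x * Sw q y z ^ 2 = 1 - x * (q^2 * (1 + q * y * z - t)^2) / (1 - t)^2"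
      unfolding sw by (simp add: power_divide power_mult_distrib)
    also have "\<dots> = ((1 - t)^2 - q^2 * (1 + q * y * z - t)^2 * x) / (1 - t)^2"
      using t1' by (simp add: field_simps)
    finally show ?thesis unfolding D_def t_def .
  qed
  have val: "x * q^4 * y / (1 - q^2 * y * z) * (1 / (1 - x * Sw q y z ^ 2))
       = q^4 * x * y * (1 - q^2 * y * z) / D"
    unfolding e1 t_def[symmetric]
  proof (cases "D = 0")
    case False
    then show "x * q ^ 4 * y / (1 - t) * (1 / (D / (1 - t)\<^sup>2)) = q ^ 4 * x * y * (1 - t) / D"
      using t1' by (simp add: field_simps power2_eq_square)
  qed simp
  have "(Wt x q y z has_sum q^4 * x * y * (1 - q^2 * y * z) / D) UNIV" using H val by simp
  moreover have "(Wt x q y z has_sum q^4 * x * y * (1 - q^2 * y * z) / D) UNIV =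
     ((\<lambda>P. x ^ vcols P * y ^ hrows P * q ^ operim P * z ^ cfirst P) has_sum q^4 * x * y * (1 - q^2 * y * z) / D) CPbu_classes"
    by (rule has_sum_reindex_bij_witness[where i = extr and j = Phi])
       (auto simp: extr_Phi Phi_extr Phi_in weight_Phi)
  ultimately show "((\<lambda>P. x ^ vcols P * y ^ hrows P * q ^ operim P * z ^ cfirst P) has_sum
        (q^4 * x * y * (1 - q^2 * y * z) /
         ((1 - q^2 * y * z)^2 - q^2 * (1 + q * y * z - q^2 * y * z)^2 * x))) CPbu_classes"
    unfolding D_def by simp
qed

end
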